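(* Let $P_0,P_1,P_2\in\mathbb H$ be distinct and set $d_0:=\sqrt{1-2\langle P_1,P_2\rangle}$, $d_1:=\sqrt{1-2\langle P_2,P_0\rangle}$, $d_2:=\sqrt{1-2\langle P_0,P_1\rangle}$ (indices in $\mathbb Z/3\mathbb Z$). Then for every $i\in\mathbb Z/3\mathbb Z$, $$d_i\ge\sqrt3\qquad\text{and}\qquad d_i^2-1\le(d_{i+1}^2-1)(d_{i+2}^2-1).$$
   Context: $\langle v,w\rangle=-v_1w_1+v_2w_2+v_3w_3$ on $\mathbb R^3$; $\mathbb H=\{P\in\mathbb R^3:\langle P,P\rangle=-1,\ P_1\ge1\}$. *)

theory Defs
  imports "HOL-Analysis.Analysis"
begin

definition mink :: "real^3 \<Rightarrow> real^3 \<Rightarrow> real" where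
  "mink v w = - (v$1 * w$1) + v$2 * w$2 + v$3 * w$3"

definition hyp :: "(real^3) set" where
  "hyp = {P. mink P P = -1 \<and> P$1 \<ge> 1}"

end

theory Submission
  imports Defs
begin
lemma cs: fixes a b x y z w :: real
  assumes "a\<ge>1" "b\<ge>1" "x^2+y^2 = a^2 - 1" "z^2+w^2 = b^2 - 1"
  shows "a*b - x*z - y*w \<ge> 1" and "a*b - x*z - y*w = 1 \<Longrightarrow> a=b \<and> x=z \<and> y=w"
proof -
  have L: "(x*z+y*w)^2 + (x*w-y*z)^2 = (x^2+y^2)*(z^2+w^2)" by algebra
  have E: "(a*b-1)^2 - (a^2-1)*(b^2-1) = (a-b)^2" by algebra
  have sq: "(x*z+y*w)^2 \<le> (a*b-1)^2" using L E assms(3,4)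
    by (smt (verit) zero_le_power2)
  have ab: "a*b - 1 \<ge> 0" using assms(1,2) by (smt (verit) mult_mono one_le_power power2_eq_square)
  from sq ab have "x*z+y*w \<le> a*b-1" using abs_le_square_iff[of "x*z+y*w" "a*b-1"] by simp
  then show "a*b - x*z - y*w \<ge> 1" by simp
  assume eq: "a*b - x*z - y*w = 1"
  then have "x*z+y*w = a*b-1" by simp
  then have "(x*z+y*w)^2 = (a*b-1)^2" by simp
  with L E assms(3,4) have "(a-b)^2 + (x*w-y*z)^2 = 0" by (smt (verit) zero_le_power2)
  hence ab': "a = b" by (smt (verit) zero_le_power2 zero_eq_power2)
  have "(x-z)^2 + (y-w)^2 = (x^2+y^2) + (z^2+w^2) - 2*(x*z+y*w)" by algebra
  also have "\<dots> = 0" using eq ab' assms(3,4) by (simp add: power2_eq_square) 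
  finally have "(x-z)^2 + (y-w)^2 = 0" .
  hence "x = z" "y = w" by (smt (verit) zero_le_power2 zero_eq_power2)+
  with ab' show "a=b \<and> x=z \<and> y=w" by simp
qed

lemma gram: fixes a1 a2 a3 b1 b2 b3 c1 c2 c3 :: real
  shows "let g = (\<lambda>p1 p2 p3 q1 q2 q3. -(p1*q1)+p2*q2+p3*q3);
    A = g a1 a2 a3 a1 a2 a3; B = g b1 b2 b3 b1 b2 b3; C = g c1 c2 c3 c1 c2 c3;
    x = g b1 b2 b3 c1 c2 c3; y = g c1 c2 c3 a1 a2 a3; z = g a1 a2 a3 b1 b2 b3
   in A*B*C + 2*x*y*z - A*x^2 - B*y^2 - C*z^2 = - ((a1*(b2*c3-b3*c2) - a2*(b1*c3-b3*c1) + a3*(b1*c2-b2*c1))^2)"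
  by (simp add: Let_def) algebra

lemma mink_ge1: assumes "P \<in> hyp" "Q \<in> hyp"
  shows "- mink P Q \<ge> 1" and "P \<noteq> Q \<Longrightarrow> - mink P Q > 1"
proof -
  have h: "(P$2)^2 + (P$3)^2 = (P$1)^2 - 1" "P$1 \<ge> 1" "(Q$2)^2 + (Q$3)^2 = (Q$1)^2 - 1" "Q$1 \<ge> 1"
    using assms by (auto simp: hyp_def mink_def power2_eq_square)
  have e: "- mink P Q = P$1 * Q$1 - P$2 * Q$2 - P$3 * Q$3" by (simp add: mink_def)
  show "- mink P Q \<ge> 1" using cs(1)[OF h(2,4,1,3)] e by simp
  assume ne: "P \<noteq> Q"
  show "- mink P Q > 1"
  proof (rule ccontr)
    assume "\<not> - mink P Q > 1"
    with cs(1)[OF h(2,4,1,3)] e have "P$1 * Q$1 - P$2 * Q$2 - P$3 * Q$3 = 1" by simp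
    from cs(2)[OF h(2,4,1,3) this] have "P = Q"
      by (simp add: vec_eq_iff forall_3)
    with ne show False by simp
  qed
qed

lemma key: fixes a b c :: real
  assumes "a > 1" "b > 1" "c > 1" "a^2+b^2+c^2 - 1 - 2*a*b*c \<le> 0"
  shows "a \<le> 2*b*c"
proof (rule ccontr)
  assume "\<not> a \<le> 2*b*c"
  hence "a*(a - 2*b*c) > 0" using assms by simp
  moreover have "b^2 > 1" "c^2 > 1" using assms less_1_mult[of b b] less_1_mult[of c c] by (simp_all add: power2_eq_square)
  then have "b^2 + c^2 - 1 > 0" by simp
  ultimately show False using assms(4) by (simp add: algebra_simps power2_eq_square)
qed

theorem lemma3p2:
  fixes P :: "nat \<Rightarrow> real^3" and d :: "nat \<Rightarrow> real"
  assumes hP: "\<And>i. i < 3 \<Longrightarrow> P i \<in> hyp"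
    and distinct: "P 0 \<noteq> P 1" "P 1 \<noteq> P 2" "P 2 \<noteq> P 0"
    and hd: "\<And>i. d i = sqrt (1 - 2 * mink (P ((i + 1) mod 3)) (P ((i + 2) mod 3)))"
  shows "\<forall>i<3. d i \<ge> sqrt 3 \<and>
           (d i)^2 - 1 \<le> ((d ((i + 1) mod 3))^2 - 1) * ((d ((i + 2) mod 3))^2 - 1)"
proof -
  define c0 where "c0 = - mink (P 1) (P 2)"
  define c1 where "c1 = - mink (P 2) (P 0)"
  define c2 where "c2 = - mink (P 0) (P 1)"
  have H: "P 0 \<in> hyp" "P 1 \<in> hyp" "P 2 \<in> hyp" using hP by auto
  have c0g: "c0 > 1" unfolding c0_def using mink_ge1(2)[OF H(2,3)] distinct by simp
  have c1g: "c1 > 1" unfolding c1_def using mink_ge1(2)[OF H(3,1)] distinct by simp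
  have c2g: "c2 > 1" unfolding c2_def using mink_ge1(2)[OF H(1,2)] distinct by simp
  have d0: "d 0 = sqrt (1 + 2*c0)" using hd[of 0] by (simp add: c0_def numeral_2_eq_2)
  have d1: "d 1 = sqrt (1 + 2*c1)" using hd[of 1] by (simp add: c1_def numeral_2_eq_2)
  have d2: "d 2 = sqrt (1 + 2*c2)" using hd[of 2] by (simp add: c2_def numeral_2_eq_2)
  have dd0: "(d 0)^2 - 1 = 2*c0" using d0 c0g by simp
  have dd1: "(d 1)^2 - 1 = 2*c1" using d1 c1g by simp
  have dd2: "(d 2)^2 - 1 = 2*c2" using d2 c2g by simp
  have s0: "d 0 \<ge> sqrt 3" using d0 c0g by simp
  have s1: "d 1 \<ge> sqrt 3" using d1 c1g by simp
  have s2: "d 2 \<ge> sqrt 3" using d2 c2g by simp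
  have mm: "\<And>i. i < 3 \<Longrightarrow> mink (P i) (P i) = -1" using hP by (auto simp: hyp_def)
  have G: "c0^2+c1^2+c2^2 - 1 - 2*c0*c1*c2 \<le> 0"
  proof -
    have g: "mink (P 0) (P 0) * mink (P 1) (P 1) * mink (P 2) (P 2)
       + 2 * mink (P 1) (P 2) * mink (P 2) (P 0) * mink (P 0) (P 1)
       - mink (P 0) (P 0) * (mink (P 1) (P 2))^2 - mink (P 1) (P 1) * (mink (P 2) (P 0))^2
       - mink (P 2) (P 2) * (mink (P 0) (P 1))^2 \<le> 0"
      using gram[of "P 0 $ 1" "P 0 $ 2" "P 0 $ 3" "P 1 $ 1" "P 1 $ 2" "P 1 $ 3" "P 2 $ 1" "P 2 $ 2" "P 2 $ 3"]
      unfolding mink_def Let_def by simp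
    then show ?thesis using mm[of 0] mm[of 1] mm[of 2] unfolding c0_def c1_def c2_def
      by (simp add: power2_eq_square)
  qed
  have k0: "c0 \<le> 2*c1*c2" using key[OF c0g c1g c2g] G by simp
  have k1: "c1 \<le> 2*c2*c0" using key[OF c1g c2g c0g] G by (simp add: algebra_simps)
  have k2: "c2 \<le> 2*c0*c1" using key[OF c2g c0g c1g] G by (simp add: algebra_simps)
  show ?thesis
  proof (intro allI impI)
    fix i :: nat assume "i < 3"
    then consider "i = 0" | "i = 1" | "i = 2" by linarith
    then show "d i \<ge> sqrt 3 \<and>
           (d i)^2 - 1 \<le> ((d ((i + 1) mod 3))^2 - 1) * ((d ((i + 2) mod 3))^2 - 1)"
    proof cases
      case 1 then show ?thesis using s0 dd0 dd1 dd2 k0 by (simp add: numeral_2_eq_2)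
    next
      case 2 then show ?thesis using s1 dd0 dd1 dd2 k1 by (simp add: algebra_simps numeral_2_eq_2)
    next
      case 3 then show ?thesis using s2 dd0 dd1 dd2 k2 by (simp add: algebra_simps numeral_2_eq_2)
    qed
  qed
qed

end
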